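(* Let $X$ be an infinite compact metrizable space, $h\colon X\to X$ a minimal homeomorphism, and suppose $(X,h)$ has the topological small boundary property. Then for any $N\in\mathbb{N}$ there exists a closed set $Y\subset X$ such that $\mathrm{int}(Y)\neq\varnothing$, $\overline{\mathrm{int}(Y)}=Y$, $\partial Y$ is topologically $h$-small, and the sets $Y,h(Y),\dots,h^N(Y)$ are pairwise disjoint.
   Context: $\partial A$ is the boundary of $A$. A closed set $F\subset X$ is topologically $h$-small if there is $m\in\mathbb{Z}_{+}$ such that whenever $d(0),\dots,d(m)$ are $m+1$ distinct integers, $h^{d(0)}(F)\cap\cdots\cap h^{d(m)}(F)=\varnothing$. $(X,h)$ has the topological small boundary property if whenever $F,K\subset X$ are disjoint compact sets, there exist open sets $U,V\subset X$ with $F\subset U$, $K\subset V$, $\overline{U}\cap\overline{V}=\varnothing$ and $\partial U$ topologically $h$-small. *)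

theory Defs
  imports "HOL-Analysis.Analysis"
begin

definition zpow :: "('a \<Rightarrow> 'a) \<Rightarrow> int \<Rightarrow> 'a \<Rightarrow> 'a" where
  "zpow h d = (if 0 \<le> d then h ^^ nat d else (inv h) ^^ nat (- d))"

definition is_homeo :: "('a::topological_space \<Rightarrow> 'a) \<Rightarrow> bool" where
  "is_homeo h \<longleftrightarrow> (\<exists>g. homeomorphism UNIV UNIV h g)"

definition minimal_homeo :: "('a::topological_space \<Rightarrow> 'a) \<Rightarrow> bool" where
  "minimal_homeo h \<longleftrightarrow> is_homeo h \<and>
     (\<forall>Z. closed Z \<and> h ` Z = Z \<longrightarrow> Z = {} \<or> Z = UNIV)"

definition top_small :: "('a::topological_space \<Rightarrow> 'a) \<Rightarrow> 'a set \<Rightarrow> bool" where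
  "top_small h F \<longleftrightarrow> closed F \<and> (\<exists>m::nat. \<forall>d::nat \<Rightarrow> int.
      inj_on d {0..m} \<longrightarrow> (\<Inter>i\<in>{0..m}. zpow h (d i) ` F) = {})"

definition small_boundary_prop :: "('a::topological_space \<Rightarrow> 'a) \<Rightarrow> bool" where
  "small_boundary_prop h \<longleftrightarrow> (\<forall>F K. compact F \<and> compact K \<and> F \<inter> K = {} \<longrightarrow>
     (\<exists>U V. open U \<and> open V \<and> F \<subseteq> U \<and> K \<subseteq> V \<and> closure U \<inter> closure V = {}
            \<and> top_small h (frontier U)))"

end

theory Submission
  imports Defs
begin

lemma top_small_subset:
  assumes "top_small h F" "closed G" "G \<subseteq> F"
  shows "top_small h G"
proof -
  from assms(1) obtain m where m: "\<forall>d::nat \<Rightarrow> int. inj_on d {0..m} \<longrightarrow> (\<Inter>i\<in>{0..m}. zpow h (d i) ` F) = {}"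
    unfolding top_small_def by blast
  have "\<forall>d::nat \<Rightarrow> int. inj_on d {0..m} \<longrightarrow> (\<Inter>i\<in>{0..m}. zpow h (d i) ` G) = {}"
  proof (intro allI impI)
    fix d :: "nat \<Rightarrow> int" assume "inj_on d {0..m}"
    then have "(\<Inter>i\<in>{0..m}. zpow h (d i) ` F) = {}" using m by blast
    moreover have "(\<Inter>i\<in>{0..m}. zpow h (d i) ` G) \<subseteq> (\<Inter>i\<in>{0..m}. zpow h (d i) ` F)"
      using assms(3) by blast
    ultimately show "(\<Inter>i\<in>{0..m}. zpow h (d i) ` G) = {}" by blast
  qed
  then show ?thesis using assms(2) unfolding top_small_def by blast
qed

lemma no_periodic:
  fixes h :: "'a::metric_space \<Rightarrow> 'a"
  assumes inf: "infinite (UNIV :: 'a set)" and mh: "minimal_homeo h"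
    and ij: "i < j" and eq: "(h ^^ i) x = (h ^^ j) x"
  shows False
proof -
  obtain g where hg: "homeomorphism UNIV UNIV h g" using mh unfolding minimal_homeo_def is_homeo_def by blast
  have injh: "inj h" proof (rule injI)
    fix a b assume "h a = h b"
    then have "g (h a) = g (h b)" by simp
    then show "a = b" using hg unfolding homeomorphism_def by simp
  qed
  define p where "p = j - i"
  have p: "p > 0" using ij p_def by simp
  have "(h ^^ i) ((h ^^ p) x) = (h ^^ i) x"
    using eq ij p_def by (metis funpow_add le_add_diff_inverse less_imp_le o_apply)
  then have hp: "(h ^^ p) x = x" using inj_fn[OF injh] by (meson injD)
  define Z where "Z = (\<lambda>k. (h ^^ k) x) ` {..<p}"
  have fin: "finite Z" unfolding Z_def by simp
  have "h ` Z = Z"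
  proof
    show "h ` Z \<subseteq> Z"
    proof
      fix y assume "y \<in> h ` Z"
      then obtain k where k: "k < p" "y = h ((h ^^ k) x)" unfolding Z_def by auto
      show "y \<in> Z"
      proof (cases "Suc k < p")
        case True then show ?thesis using k unfolding Z_def by (auto intro!: image_eqI[where x="Suc k"])
      next
        case False then have "Suc k = p" using k by simp
        then have "y = x" using k hp by (metis funpow.simps(2) o_apply)
        then show ?thesis using p unfolding Z_def by (auto intro!: image_eqI[where x=0])
      qed
    qed
    show "Z \<subseteq> h ` Z"
    proof
      fix y assume "y \<in> Z"
      then obtain k where k: "k < p" "y = (h ^^ k) x" unfolding Z_def by auto
      show "y \<in> h ` Z"
      proof (cases k)
        case 0
        have "x = h ((h ^^ (p - 1)) x)" using hp p
          by (metis Suc_diff_1 funpow.simps(2) o_apply)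
        moreover have "(h ^^ (p - 1)) x \<in> Z" using p unfolding Z_def by auto
        ultimately show ?thesis using k 0 by auto
      next
        case (Suc k')
        then have "y = h ((h ^^ k') x)" using k by simp
        moreover have "(h ^^ k') x \<in> Z" using k Suc unfolding Z_def by auto
        ultimately show ?thesis by auto
      qed
    qed
  qed
  moreover have "closed Z" using fin by (simp add: finite_imp_closed)
  ultimately have "Z = {} \<or> Z = UNIV" using mh unfolding minimal_homeo_def by blast
  moreover have "Z \<noteq> {}" using p unfolding Z_def by auto
  ultimately show False using fin inf by auto
qed

theorem lemma5p4:
  fixes h :: "'a::metric_space \<Rightarrow> 'a" and N :: nat
  assumes "compact (UNIV :: 'a set)"
    and "infinite (UNIV :: 'a set)"
    and "minimal_homeo h"
    and "small_boundary_prop h"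
  shows "\<exists>Y. closed Y \<and> interior Y \<noteq> {} \<and> closure (interior Y) = Y
           \<and> top_small h (frontier Y)
           \<and> (\<forall>i\<le>N. \<forall>j\<le>N. i \<noteq> j \<longrightarrow> (h ^^ i) ` Y \<inter> (h ^^ j) ` Y = {})"
proof -
  obtain g where hg: "homeomorphism UNIV UNIV h g" using assms(3) unfolding minimal_homeo_def is_homeo_def by blast
  have ch: "continuous_on UNIV h" using hg homeomorphism_def by blast
  have chn: "continuous_on UNIV (h ^^ n)" for n
  proof (induction n)
    case 0 then show ?case by (simp add: continuous_on_id')
  next
    case (Suc n)
    have "continuous_on UNIV (h \<circ> (h ^^ n))"
      by (rule continuous_on_compose[OF Suc continuous_on_subset[OF ch subset_UNIV]])
    then show ?case by simp
  qed
  obtain x :: 'a where True by blast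
  have dist_ne: "(h ^^ i) x \<noteq> (h ^^ j) x" if "i \<noteq> j" for i j
  proof
    assume e: "(h ^^ i) x = (h ^^ j) x"
    show False
    proof (cases "i < j")
      case True then show ?thesis using no_periodic[OF assms(2,3) True e] by blast
    next
      case False then have "j < i" using that by simp
      then show ?thesis using no_periodic[OF assms(2,3) \<open>j < i\<close> e[symmetric]] by blast
    qed
  qed
  define D where "D = {dist ((h ^^ i) x) ((h ^^ j) x) | i j. i \<le> N \<and> j \<le> N \<and> i \<noteq> j}"
  have finD: "finite D"
  proof -
    have "D \<subseteq> (\<lambda>(i,j). dist ((h ^^ i) x) ((h ^^ j) x)) ` ({..N} \<times> {..N})"
      unfolding D_def by auto
    then show ?thesis by (rule finite_subset) simp
  qed
  define \<delta> where "\<delta> = Min (insert 1 D) / 2"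
  have posD: "\<forall>d\<in>insert 1 D. d > 0"
  proof
    fix d assume "d \<in> insert 1 D"
    then show "d > 0"
    proof
      assume "d \<in> D"
      then obtain i j where "d = dist ((h ^^ i) x) ((h ^^ j) x)" "i \<noteq> j" unfolding D_def by blast
      then show ?thesis using dist_ne by simp
    qed simp
  qed
  have dpos: "\<delta> > 0" unfolding \<delta>_def using finD posD by simp
  have dle: "2 * \<delta> \<le> dist ((h ^^ i) x) ((h ^^ j) x)" if "i \<le> N" "j \<le> N" "i \<noteq> j" for i j
  proof -
    have "dist ((h ^^ i) x) ((h ^^ j) x) \<in> insert 1 D" unfolding D_def using that by blast
    then have "Min (insert 1 D) \<le> dist ((h ^^ i) x) ((h ^^ j) x)"
      using finD by (intro Min_le) auto
    then show ?thesis unfolding \<delta>_def by simp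
  qed
  define Ob where "Ob = (\<Inter>i\<in>{..N}. (h ^^ i) -` ball ((h ^^ i) x) \<delta>)"
  have oO: "open Ob" unfolding Ob_def
  proof (rule open_INT)
    show "finite {..N}" by simp
    show "\<forall>i\<in>{..N}. open ((h ^^ i) -` ball ((h ^^ i) x) \<delta>)"
      using open_vimage[OF open_ball chn] by blast
  qed
  have xO: "x \<in> Ob" unfolding Ob_def using dpos by simp
  have cF: "compact {x}" by simp
  have cK: "compact (- Ob)"
    using closed_Int_compact[of "- Ob" UNIV] assms(1) oO by (simp add: closed_Compl)
  obtain U V where UV: "open U" "open V" "{x} \<subseteq> U" "- Ob \<subseteq> V" "closure U \<inter> closure V = {}"
    "top_small h (frontier U)"
  proof -
    have "{x} \<inter> - Ob = {}" using xO by blast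
    then show ?thesis using assms(4) cF cK that unfolding small_boundary_prop_def by meson
  qed
  define Y where "Y = closure U"
  have YO: "Y \<subseteq> Ob" using UV(4,5) closure_subset unfolding Y_def by blast
  have intY: "U \<subseteq> interior Y" unfolding Y_def using UV(1) by (simp add: interior_maximal closure_subset)
  have cl: "closure (interior Y) = Y"
  proof
    show "closure (interior Y) \<subseteq> Y" unfolding Y_def
      by (simp add: closure_minimal interior_subset)
    show "Y \<subseteq> closure (interior Y)" unfolding Y_def using intY closure_mono Y_def by blast
  qed
  have fr: "frontier Y \<subseteq> frontier U"
    unfolding Y_def frontier_def closure_closure interior_open[OF UV(1)] using intY Y_def by blast
  have ts: "top_small h (frontier Y)"
    by (rule top_small_subset[OF UV(6) frontier_closed fr])
  have disj: "(h ^^ i) ` Y \<inter> (h ^^ j) ` Y = {}" if "i \<le> N" "j \<le> N" "i \<noteq> j" for i j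
  proof (rule ccontr)
    assume "(h ^^ i) ` Y \<inter> (h ^^ j) ` Y \<noteq> {}"
    then obtain z where z: "z \<in> (h ^^ i) ` Y" "z \<in> (h ^^ j) ` Y" by blast
    have "(h ^^ i) ` Ob \<subseteq> ball ((h ^^ i) x) \<delta>" unfolding Ob_def using that by auto
    moreover have "(h ^^ j) ` Ob \<subseteq> ball ((h ^^ j) x) \<delta>" unfolding Ob_def using that by auto
    moreover have "z \<in> (h ^^ i) ` Ob" "z \<in> (h ^^ j) ` Ob" using z YO by blast+
    ultimately have "z \<in> ball ((h ^^ i) x) \<delta>" "z \<in> ball ((h ^^ j) x) \<delta>" by blast+
    then have "dist ((h ^^ i) x) z < \<delta>" "dist ((h ^^ j) x) z < \<delta>" by simp_all
    then have "dist ((h ^^ i) x) ((h ^^ j) x) < 2 * \<delta>" using dist_triangle_less_add[of "(h ^^ i) x" z \<delta> "(h ^^ j) x" \<delta>] by simp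
    then show False using dle[OF that] by simp
  qed
  show ?thesis
    apply (rule exI[of _ Y])
    using cl ts disj intY UV(3) unfolding Y_def by blast
qed

end
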